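(* Let $D$ be a locatable digraph of order $n$ with $\gamma_{OL}(D)=n$. Then $D$ contains no double-forced vertex.
   Context: Digraphs are finite and may contain loops; between two distinct vertices there may be arcs in one or both directions, no repeated arcs. $N^-(v)=\{u: uv\text{ is an arc}\}$ (contains $v$ iff $v$ has a loop). An OLD set of $D$ is a set $S\subseteq V(D)$ such that every vertex has an in-neighbour in $S$ and for every two distinct vertices $u,w$ some vertex of $S$ lies in exactly one of $N^-(u),N^-(w)$. $D$ is locatable if it has an OLD set, and then $\gamma_{OL}(D)$ is the minimum size of an OLD set. A vertex $v$ is domination-forced if some vertex $w$ has $N^-(w)=\{v\}$; $v$ is location-forced if there is a pair $\{x,y\}$ of distinct vertices with $N^-(x)\ominus N^-(y)=\{v\}$ ($\ominus$ = symmetric difference). A vertex is double-forced if it is both domination-forced and location-forced, or if it is location-forced because of two different pairs $\{x,y\}\neq\{x',y'\}$ (i.e. $N^-(x)\ominus N^-(y)=N^-(x')\ominus N^-(y')=\{v\}$). *)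

theory Defs
  imports Main
begin

definition digraph :: "'a set \<Rightarrow> ('a \<times> 'a) set \<Rightarrow> bool" where
  "digraph V A \<longleftrightarrow> finite V \<and> A \<subseteq> V \<times> V"

definition in_nbhd :: "'a set \<Rightarrow> ('a \<times> 'a) set \<Rightarrow> 'a \<Rightarrow> 'a set" where
  "in_nbhd V A v = {u \<in> V. (u, v) \<in> A}"

definition symdiff :: "'a set \<Rightarrow> 'a set \<Rightarrow> 'a set" where
  "symdiff X Y = (X - Y) \<union> (Y - X)"

definition is_OLD :: "'a set \<Rightarrow> ('a \<times> 'a) set \<Rightarrow> 'a set \<Rightarrow> bool" where
  "is_OLD V A S \<longleftrightarrow> S \<subseteq> V
     \<and> (\<forall>v\<in>V. in_nbhd V A v \<inter> S \<noteq> {})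
     \<and> (\<forall>u\<in>V. \<forall>w\<in>V. u \<noteq> w \<longrightarrow> symdiff (in_nbhd V A u) (in_nbhd V A w) \<inter> S \<noteq> {})"

definition locatable :: "'a set \<Rightarrow> ('a \<times> 'a) set \<Rightarrow> bool" where
  "locatable V A \<longleftrightarrow> (\<exists>S. is_OLD V A S)"

definition gamma_OL :: "'a set \<Rightarrow> ('a \<times> 'a) set \<Rightarrow> nat" where
  "gamma_OL V A = Min (card ` {S. is_OLD V A S})"

definition domination_forced :: "'a set \<Rightarrow> ('a \<times> 'a) set \<Rightarrow> 'a \<Rightarrow> bool" where
  "domination_forced V A v \<longleftrightarrow> (\<exists>w\<in>V. in_nbhd V A w = {v})"

definition location_forced :: "'a set \<Rightarrow> ('a \<times> 'a) set \<Rightarrow> 'a \<Rightarrow> bool" where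
  "location_forced V A v \<longleftrightarrow> (\<exists>x\<in>V. \<exists>y\<in>V. x \<noteq> y \<and>
      symdiff (in_nbhd V A x) (in_nbhd V A y) = {v})"

definition double_forced :: "'a set \<Rightarrow> ('a \<times> 'a) set \<Rightarrow> 'a \<Rightarrow> bool" where
  "double_forced V A v \<longleftrightarrow>
     (domination_forced V A v \<and> location_forced V A v)
   \<or> (\<exists>x\<in>V. \<exists>y\<in>V. \<exists>x'\<in>V. \<exists>y'\<in>V. x \<noteq> y \<and> x' \<noteq> y' \<and> {x, y} \<noteq> {x', y'} \<and>
        symdiff (in_nbhd V A x) (in_nbhd V A y) = {v} \<and>
        symdiff (in_nbhd V A x') (in_nbhd V A y') = {v})"

end

theory Submission
  imports Defs
begin

definition labs :: "'a set set \<Rightarrow> 'a set" where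
  "labs F = {v. \<exists>P\<in>F. \<exists>Q\<in>F. symdiff P Q = {v}}"

lemma labs_finite: "finite F \<Longrightarrow> finite (labs F)"
proof -
  assume f: "finite F"
  have "labs F \<subseteq> (\<lambda>(P,Q). the_elem (symdiff P Q)) ` (F \<times> F)"
  proof
    fix u assume "u \<in> labs F"
    then obtain P Q where "P \<in> F" "Q \<in> F" "symdiff P Q = {u}" unfolding labs_def by blast
    then show "u \<in> (\<lambda>(P,Q). the_elem (symdiff P Q)) ` (F \<times> F)"
      by (metis (no_types, lifting) SigmaI case_prod_conv image_eqI the_elem_eq)
  qed
  then show ?thesis using f by (meson finite_SigmaI finite_imageI finite_subset)
qed

lemma symdiff_minus: "symdiff (P - {v}) (Q - {v}) = symdiff P Q - {v}"
  unfolding symdiff_def by blast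

lemma edge_shape: 
  assumes "symdiff P Q = {v}" shows "(v \<notin> P \<and> Q = insert v P) \<or> (v \<notin> Q \<and> P = insert v Q)"
proof -
  have h: "x \<in> P \<longleftrightarrow> x \<in> Q" if "x \<noteq> v" for x
    using assms that unfolding symdiff_def set_eq_iff by blast
  have hv: "(v \<in> P) \<noteq> (v \<in> Q)" using assms unfolding symdiff_def set_eq_iff by blast
  show ?thesis
  proof (cases "v \<in> P")
    case True
    then have "v \<notin> Q" using hv by simp
    moreover have "P = insert v Q" using h True \<open>v \<notin> Q\<close> by (intro set_eqI) (metis insert_iff)
    ultimately show ?thesis by simp
  next
    case False
    then have "v \<in> Q" using hv by simp
    moreover have "Q = insert v P" using h \<open>v \<in> Q\<close> False by (intro set_eqI) (metis insert_iff)
    ultimately show ?thesis using False by simp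
  qed
qed

lemma labs_sub: "labs F \<subseteq> insert v (labs ((\<lambda>Q. Q - {v}) ` F))"
proof
  fix u assume "u \<in> labs F"
  then obtain P Q where pq: "P \<in> F" "Q \<in> F" "symdiff P Q = {u}" unfolding labs_def by blast
  show "u \<in> insert v (labs ((\<lambda>Q. Q - {v}) ` F))"
  proof (cases "u = v")
    case False
    then have "symdiff (P - {v}) (Q - {v}) = {u}" using pq(3) symdiff_minus by fastforce
    then show ?thesis using pq unfolding labs_def by blast
  qed simp
qed

lemma collapse_card1:
  assumes "finite F" "P \<in> F" "v \<notin> P" "insert v P \<in> F"
  shows "card ((\<lambda>Q. Q - {v}) ` F) + 1 \<le> card F"
proof -
  have "(\<lambda>Q. Q - {v}) ` F = (\<lambda>Q. Q - {v}) ` (F - {insert v P})"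
    using assms by (auto simp: image_iff)
  also have "card \<dots> \<le> card (F - {insert v P})" by (rule card_image_le) (use assms in auto)
  moreover have "card F > 0" using assms card_gt_0_iff by blast
  ultimately show ?thesis using assms by (simp add: card_Diff_singleton)
qed

lemma collapse_card2:
  assumes "finite F" "P \<in> F" "v \<notin> P" "insert v P \<in> F"
    "P' \<in> F" "v \<notin> P'" "insert v P' \<in> F" "P \<noteq> P'"
  shows "card ((\<lambda>Q. Q - {v}) ` F) + 2 \<le> card F"
proof -
  have ne: "insert v P \<noteq> insert v P'" using assms by (metis Diff_insert_absorb)
  have "(\<lambda>Q. Q - {v}) ` F = (\<lambda>Q. Q - {v}) ` (F - {insert v P, insert v P'})"
  proof
    show "(\<lambda>Q. Q - {v}) ` F \<subseteq> (\<lambda>Q. Q - {v}) ` (F - {insert v P, insert v P'})"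
    proof
      fix x assume "x \<in> (\<lambda>Q. Q - {v}) ` F"
      then obtain Q where Q: "Q \<in> F" "x = Q - {v}" by blast
      show "x \<in> (\<lambda>Q. Q - {v}) ` (F - {insert v P, insert v P'})"
      proof (cases "Q = insert v P")
        case True
        then have "x = P - {v}" using Q assms by auto
        moreover have "P \<in> F - {insert v P, insert v P'}" using assms by auto
        ultimately show ?thesis by blast
      next
        case f1: False
        show ?thesis
        proof (cases "Q = insert v P'")
          case True
          then have "x = P' - {v}" using Q assms by auto
          moreover have "P' \<in> F - {insert v P, insert v P'}" using assms by auto
          ultimately show ?thesis by blast
        next
          case False
          then show ?thesis using f1 Q by blast
        qed
      qed
    qed
  qed auto
  also have "card \<dots> \<le> card (F - {insert v P, insert v P'})" by (rule card_image_le) (use assms in auto)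
  also have "\<dots> = card F - 2" using assms ne by (simp add: card_Diff_subset)
  finally have "card ((\<lambda>Q. Q - {v}) ` F) \<le> card F - 2" .
  moreover have "card {insert v P, insert v P'} \<le> card F" using assms by (intro card_mono) auto
  ultimately show ?thesis using ne by simp
qed

lemma labs_bound: "finite F \<Longrightarrow> F \<noteq> {} \<Longrightarrow> card (labs F) + 1 \<le> card F"
proof (induction "card F" arbitrary: F rule: less_induct)
  case less
  show ?case
  proof (cases "labs F = {}")
    case True
    then show ?thesis using less.prems by (simp add: Suc_leI card_gt_0_iff)
  next
    case False
    then obtain v where "v \<in> labs F" by blast
    then obtain P Q where pq: "P \<in> F" "Q \<in> F" "symdiff P Q = {v}" unfolding labs_def by blast
    then obtain R where R: "R \<in> F" "v \<notin> R" "insert v R \<in> F" using edge_shape by metis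
    let ?G = "(\<lambda>Q. Q - {v}) ` F"
    have c: "card ?G + 1 \<le> card F" using collapse_card1[OF less.prems(1) R] .
    have "card (labs ?G) + 1 \<le> card ?G"
      using less.hyps[of ?G] c less.prems by auto
    moreover have "card (labs F) \<le> card (labs ?G) + 1"
    proof -
      have "card (labs F) \<le> card (insert v (labs ?G))"
        by (rule card_mono) (simp_all add: labs_finite less.prems labs_sub)
      also have "\<dots> \<le> card (labs ?G) + 1" by (simp add: card_insert_if labs_finite less.prems)
      finally show ?thesis .
    qed
    ultimately show ?thesis using c by linarith
  qed
qed

lemma labs_double:
  assumes "finite F" "P1 \<in> F" "Q1 \<in> F" "P2 \<in> F" "Q2 \<in> F"
    "symdiff P1 Q1 = {v}" "symdiff P2 Q2 = {v}" "{P1, Q1} \<noteq> {P2, Q2}"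
  shows "card (labs F) + 2 \<le> card F"
proof -
  obtain R1 where R1: "R1 \<in> F" "v \<notin> R1" "insert v R1 \<in> F" "{P1,Q1} = {R1, insert v R1}"
    using edge_shape[OF assms(6)] assms by (metis insert_commute)
  obtain R2 where R2: "R2 \<in> F" "v \<notin> R2" "insert v R2 \<in> F" "{P2,Q2} = {R2, insert v R2}"
    using edge_shape[OF assms(7)] assms by (metis insert_commute)
  have "R1 \<noteq> R2" using R1 R2 assms(8) by auto
  let ?G = "(\<lambda>Q. Q - {v}) ` F"
  have c: "card ?G + 2 \<le> card F" using collapse_card2[OF assms(1) R1(1-3) R2(1-3) \<open>R1 \<noteq> R2\<close>] .
  have "card (labs ?G) + 1 \<le> card ?G"
    using labs_bound[of ?G] assms R1 by auto
  moreover have "card (labs F) \<le> card (labs ?G) + 1"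
  proof -
    have "card (labs F) \<le> card (insert v (labs ?G))"
      by (rule card_mono) (simp_all add: labs_finite assms labs_sub)
    also have "\<dots> \<le> card (labs ?G) + 1" by (simp add: card_insert_if labs_finite assms)
    finally show ?thesis .
  qed
  ultimately show ?thesis using c by linarith
qed

theorem proposition11:
  fixes V :: "'a set" and A :: "('a \<times> 'a) set" and n :: nat
  assumes "digraph V A"
    and "card V = n"
    and "locatable V A"
    and "gamma_OL V A = n"
  shows "\<not> (\<exists>v\<in>V. double_forced V A v)"
proof
  assume "\<exists>v\<in>V. double_forced V A v"
  then obtain v where vV: "v \<in> V" and df: "double_forced V A v" by blast
  define N where "N = in_nbhd V A"
  define F where "F = insert {} (N ` V)"
  have finV: "finite V" using assms(1) unfolding digraph_def by simp
  obtain S where S: "is_OLD V A S" using assms(3) unfolding locatable_def by blast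
  have VOLD: "is_OLD V A V" using S unfolding is_OLD_def by blast
  have NV: "N w \<subseteq> V" for w unfolding N_def in_nbhd_def by auto
  have Nne: "N w \<noteq> {}" if "w \<in> V" for w using VOLD that unfolding is_OLD_def N_def by blast
  have Nsd: "symdiff (N x) (N y) \<noteq> {}" if "x \<in> V" "y \<in> V" "x \<noteq> y" for x y
    using VOLD that unfolding is_OLD_def N_def by blast
  have inj: "inj_on N V"
  proof (rule inj_onI)
    fix x y assume "x \<in> V" "y \<in> V" "N x = N y"
    then show "x = y" using Nsd[of x y] unfolding symdiff_def by auto
  qed
  have cardF: "card F = n + 1"
  proof -
    have "{} \<notin> N ` V" using Nne by auto
    then have "card F = card (N ` V) + 1" unfolding F_def using finV by simp
    also have "card (N ` V) = n" using card_image[OF inj] assms(2) by simp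
    finally show ?thesis .
  qed
  have finF: "finite F" unfolding F_def using finV by simp
  have notOLD: "\<not> is_OLD V A (V - {u})" if "u \<in> V" for u
  proof
    assume o: "is_OLD V A (V - {u})"
    have fin: "finite (card ` {S. is_OLD V A S})"
    proof (rule finite_subset)
      show "card ` {S. is_OLD V A S} \<subseteq> {..card V}"
        using finV unfolding is_OLD_def by (auto intro: card_mono)
    qed simp
    have g: "gamma_OL V A \<le> card (V - {u})"
      unfolding gamma_OL_def using o fin by (intro Min_le) auto
    have "card V > 0" using that finV card_gt_0_iff by blast
    then have "card (V - {u}) < n" using that finV assms(2) by (simp add: card_Diff_singleton)
    then show False using g assms(4) by simp
  qed
  have VL: "V \<subseteq> labs F"
  proof
    fix u assume uV: "u \<in> V"
    have "\<not> is_OLD V A (V - {u})" using notOLD[OF uV] .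
    then consider (a) w where "w \<in> V" "N w \<inter> (V - {u}) = {}"
      | (b) x y where "x \<in> V" "y \<in> V" "x \<noteq> y" "symdiff (N x) (N y) \<inter> (V - {u}) = {}"
      unfolding is_OLD_def N_def by blast
    then show "u \<in> labs F"
    proof cases
      case a
      then have "N w = {u}" using Nne[of w] NV[of w] by blast
      then have "symdiff {} (N w) = {u}" unfolding symdiff_def by simp
      then show ?thesis unfolding labs_def F_def using a by blast
    next
      case b
      have "symdiff (N x) (N y) \<subseteq> V" using NV[of x] NV[of y] unfolding symdiff_def by blast
      then have "symdiff (N x) (N y) = {u}" using b Nsd[of x y] by blast
      then show ?thesis unfolding labs_def F_def using b by blast
    qed
  qed
  have LV: "labs F \<subseteq> V"
  proof
    fix u assume "u \<in> labs F"
    then obtain P Q where "P \<in> F" "Q \<in> F" "symdiff P Q = {u}" unfolding labs_def by blast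
    moreover have "P \<subseteq> V" "Q \<subseteq> V" using \<open>P \<in> F\<close> \<open>Q \<in> F\<close> NV unfolding F_def by auto
    ultimately show "u \<in> V" unfolding symdiff_def by blast
  qed
  have cardL: "card (labs F) = n" using VL LV assms(2) by auto
  have inF: "N z \<in> F" if "z \<in> V" for z using that unfolding F_def by blast
  have eF: "{} \<in> F" unfolding F_def by blast
  have "card (labs F) + 2 \<le> card F"
    using df unfolding double_forced_def
  proof (elim disjE)
    assume "domination_forced V A v \<and> location_forced V A v"
    then obtain w x y where w: "w \<in> V" "N w = {v}" and xy: "x \<in> V" "y \<in> V" "x \<noteq> y"
      "symdiff (N x) (N y) = {v}"
      unfolding domination_forced_def location_forced_def N_def by blast
    have sd: "symdiff {} (N w) = {v}" using w unfolding symdiff_def by simp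
    have ne: "{{}, N w} \<noteq> {N x, N y}"
    proof
      assume "{{}, N w} = {N x, N y}"
      then have "{} \<in> {N x, N y}" by blast
      then show False using Nne[OF xy(1)] Nne[OF xy(2)] by blast
    qed
    show ?thesis
      by (rule labs_double[OF finF eF inF[OF w(1)] inF[OF xy(1)] inF[OF xy(2)] sd xy(4) ne])
  next
    assume "\<exists>x\<in>V. \<exists>y\<in>V. \<exists>x'\<in>V. \<exists>y'\<in>V. x \<noteq> y \<and> x' \<noteq> y' \<and> {x, y} \<noteq> {x', y'} \<and>
        symdiff (in_nbhd V A x) (in_nbhd V A y) = {v} \<and>
        symdiff (in_nbhd V A x') (in_nbhd V A y') = {v}"
    then obtain x y x' y' where h: "x \<in> V" "y \<in> V" "x' \<in> V" "y' \<in> V" "x \<noteq> y \<and> x' \<noteq> y' \<and> {x, y} \<noteq> {x', y'} \<and>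
        symdiff (in_nbhd V A x) (in_nbhd V A y) = {v} \<and>
        symdiff (in_nbhd V A x') (in_nbhd V A y') = {v}" by blast
    have s1: "symdiff (N x) (N y) = {v}" using h(5) unfolding N_def by blast
    have s2: "symdiff (N x') (N y') = {v}" using h(5) unfolding N_def by blast
    have pne: "{x, y} \<noteq> {x', y'}" using h(5) by blast
    have ne: "{N x, N y} \<noteq> {N x', N y'}"
    proof
      assume "{N x, N y} = {N x', N y'}"
      then have "(N x = N x' \<and> N y = N y') \<or> (N x = N y' \<and> N y = N x')" by (simp add: doubleton_eq_iff)
      then have "(x = x' \<and> y = y') \<or> (x = y' \<and> y = x')"
        using inj_onD[OF inj _ h(1) h(3)] inj_onD[OF inj _ h(2) h(4)]
          inj_onD[OF inj _ h(1) h(4)] inj_onD[OF inj _ h(2) h(3)] by blast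
      then show False using pne by auto
    qed
    show ?thesis
      by (rule labs_double[OF finF inF[OF h(1)] inF[OF h(2)] inF[OF h(3)] inF[OF h(4)] s1 s2 ne])
  qed
  then show False using cardL cardF by simp
qed

end
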